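(* For $n\geq 1$, $$P^{(\mathsf{cros}, \mathsf{exc}, \mathsf{fix})}(\mathfrak{S}_n(321); q, tq, r)=\left(\frac{1+xt}{1+x}\right)^{n}P^{(\mathsf{cros}, \mathsf{cpk}, \mathsf{exc}, \mathsf{fix})}\left(\mathfrak{S}_n(321); q, \frac{(1+x)^{2}t}{(x+t)(1+xt)},\frac{q(x+t)}{1+xt}, \frac{(1+x)r}{1+xt}\right),$$ equivalently, $$P^{(\mathsf{cros}, \mathsf{cpk}, \mathsf{exc}, \mathsf{fix})}(\mathfrak{S}_n(321); q, x, qt, r)=\left(\frac{1+u}{1+uv}\right)^{n}P^{(\mathsf{cros}, \mathsf{exc}, \mathsf{fix})}\left(\mathfrak{S}_n(321); q, qv, \frac{(1+uv)r}{1+u}\right),$$ where $u=\frac{1+t^{2}-2xt-(1-t)\sqrt{(1+t)^{2}-4xt}}{2(1-x)t}$ and $v=\frac{(1+t)^{2}-2xt-(1+t)\sqrt{(1+t)^{2}-4xt}}{2xt}$.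
   Context: $\mathfrak{S}_n(321)$ is the set of permutations of $[n]$ avoiding the pattern $321$. $P^{(\mathsf{stat}_1,\ldots,\mathsf{stat}_m)}(\Omega;t_1,\ldots,t_m)=\sum_{\sigma\in\Omega}\prod_jt_j^{\mathsf{stat}_j\sigma}$. $\mathsf{exc}\,\sigma=\#\{i:\sigma(i)>i\}$, $\mathsf{fix}\,\sigma=\#\{i:\sigma(i)=i\}$, $\mathsf{cpk}\,\sigma=\#\{x:\sigma^{-1}(x)<x>\sigma(x)\}$, $\mathsf{cros}\,\sigma=\sum_{i}\#\{j:j<i<\sigma(j)<\sigma(i)\text{ or }\sigma(i)<\sigma(j)\le i<j\}$. *)

theory Defs
  imports Complex_Main "HOL-Combinatorics.Permutations"
begin

definition av321 :: "nat \<Rightarrow> (nat \<Rightarrow> nat) set" where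
  "av321 n = {\<sigma>. \<sigma> permutes {1..n} \<and>
     \<not> (\<exists>i\<in>{1..n}. \<exists>j\<in>{1..n}. \<exists>k\<in>{1..n}.
           i < j \<and> j < k \<and> \<sigma> i > \<sigma> j \<and> \<sigma> j > \<sigma> k)}"

definition exc :: "nat \<Rightarrow> (nat \<Rightarrow> nat) \<Rightarrow> nat" where
  "exc n \<sigma> = card {i\<in>{1..n}. \<sigma> i > i}"

definition fixp :: "nat \<Rightarrow> (nat \<Rightarrow> nat) \<Rightarrow> nat" where
  "fixp n \<sigma> = card {i\<in>{1..n}. \<sigma> i = i}"

definition cpk :: "nat \<Rightarrow> (nat \<Rightarrow> nat) \<Rightarrow> nat" where
  "cpk n \<sigma> = card {x\<in>{1..n}. inv \<sigma> x < x \<and> x > \<sigma> x}"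

definition cros :: "nat \<Rightarrow> (nat \<Rightarrow> nat) \<Rightarrow> nat" where
  "cros n \<sigma> = (\<Sum>i\<in>{1..n}. card {j\<in>{1..n}.
       (j < i \<and> i < \<sigma> j \<and> \<sigma> j < \<sigma> i) \<or> (\<sigma> i < \<sigma> j \<and> \<sigma> j \<le> i \<and> i < j)})"

end

theory Submission
  imports Defs
begin

lemma gap:
  fixes s :: "nat \<Rightarrow> nat" and n p :: nat
  assumes s: "s permutes {1..n}" and p: "p \<le> n"
  shows "card {j\<in>{1..n}. j \<le> p \<and> s j > p} = card {k\<in>{1..n}. k > p \<and> s k \<le> p}"
proof -
  let ?X = "{j\<in>{1..n}. j \<le> p \<and> s j \<le> p}"
  let ?Y = "{j\<in>{1..n}. j \<le> p \<and> s j > p}"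
  let ?Z = "{k\<in>{1..n}. k > p \<and> s k \<le> p}"
  have "?X \<union> ?Y = {1..p}" using p by auto
  moreover have "?X \<inter> ?Y = {}" by auto
  ultimately have 1: "card ?X + card ?Y = p"
    using card_Un_disjoint[of ?X ?Y] by simp
  have b: "bij_betw s {k\<in>{1..n}. s k \<le> p} {1..p}"
  proof (rule bij_betw_imageI)
    show "inj_on s {k \<in> {1..n}. s k \<le> p}" using permutes_inj[OF s] by (auto intro: inj_on_subset)
    show "s ` {k \<in> {1..n}. s k \<le> p} = {1..p}"
    proof
      show "s ` {k \<in> {1..n}. s k \<le> p} \<subseteq> {1..p}"
        using permutes_in_image[OF s] by fastforce
      show "{1..p} \<subseteq> s ` {k \<in> {1..n}. s k \<le> p}"
      proof
        fix y assume y: "y \<in> {1..p}"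
        have "inv s y \<in> {1..n}" using y p permutes_in_image[OF permutes_inv[OF s]] by auto
        moreover have "s (inv s y) = y" using permutes_inverses(1)[OF s] by simp
        ultimately show "y \<in> s ` {k \<in> {1..n}. s k \<le> p}" using y by (intro image_eqI[of y s "inv s y"]) auto
      qed
    qed
  qed
  have "?X \<union> ?Z = {k\<in>{1..n}. s k \<le> p}" by auto
  moreover have "?X \<inter> ?Z = {}" by auto
  ultimately have 2: "card ?X + card ?Z = p" using bij_betw_same_card[OF b] card_Un_disjoint[of ?X ?Z] by simp
  from 1 2 show ?thesis by simp
qed

lemma gap_ex1:
  fixes s :: "nat \<Rightarrow> nat" and n p j :: nat
  assumes s: "s permutes {1..n}" and p: "p \<le> n" and j: "j \<in> {1..n}" "j \<le> p" "s j > p"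
  shows "\<exists>k\<in>{1..n}. k > p \<and> s k \<le> p"
proof -
  have "card {j\<in>{1..n}. j \<le> p \<and> s j > p} > 0" using j by (auto simp: card_gt_0_iff)
  then have "card {k\<in>{1..n}. k > p \<and> s k \<le> p} > 0" using gap[OF s p] by simp
  then show ?thesis by (auto simp: card_gt_0_iff)
qed

lemma gap_ex2:
  fixes s :: "nat \<Rightarrow> nat" and n p k :: nat
  assumes s: "s permutes {1..n}" and p: "p \<le> n" and k: "k \<in> {1..n}" "k > p" "s k \<le> p"
  shows "\<exists>j\<in>{1..n}. j \<le> p \<and> s j > p"
proof -
  have "card {k\<in>{1..n}. k > p \<and> s k \<le> p} > 0" using k by (auto simp: card_gt_0_iff)
  then have "card {j\<in>{1..n}. j \<le> p \<and> s j > p} > 0" using gap[OF s p] by simp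
  then show ?thesis by (auto simp: card_gt_0_iff)
qed

lemma av321_perm: "s \<in> av321 n \<Longrightarrow> s permutes {1..n}"
  by (simp add: av321_def)

lemma av321_no:
  assumes "s \<in> av321 n" "i \<in> {1..n}" "j \<in> {1..n}" "k \<in> {1..n}" "i < j" "j < k" "s i > s j" "s j > s k"
  shows False
  using assms unfolding av321_def by blast

lemma M1:
  assumes a: "s \<in> av321 n" and ij: "i \<in> {1..n}" "j \<in> {1..n}" "i < j" "s i > i" "s j > j"
  shows "s i < s j"
proof (rule ccontr)
  assume "\<not> s i < s j"
  moreover have "s i \<noteq> s j" using permutes_inj[OF av321_perm[OF a]] ij(3) by (auto dest: injD)
  ultimately have lt: "s j < s i" by simp
  obtain k where k: "k \<in> {1..n}" "k > j" "s k \<le> j"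
    using gap_ex1[OF av321_perm[OF a], of j j] ij by auto
  show False using av321_no[OF a ij(1,2) k(1) ij(3) k(2) lt] k ij by linarith
qed

lemma M2:
  assumes a: "s \<in> av321 n" and ij: "i \<in> {1..n}" "j \<in> {1..n}" "i < j" "s i \<le> i" "s j \<le> j"
  shows "s i < s j"
proof (rule ccontr)
  assume "\<not> s i < s j"
  moreover have "s i \<noteq> s j" using permutes_inj[OF av321_perm[OF a]] ij(3) by (auto dest: injD)
  ultimately have lt: "s j < s i" by simp
  obtain h where h: "h \<in> {1..n}" "h \<le> i" "s h > i"
    using gap_ex2[OF av321_perm[OF a], of i j] ij lt by auto
  have "h < i" using h ij by (metis le_neq_implies_less not_le)
  show False using av321_no[OF a h(1) ij(1,2) \<open>h < i\<close> ij(3)] h ij lt by linarith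
qed

lemma F321:
  assumes a: "s \<in> av321 n" and jb: "j \<in> {1..n}" "b \<in> {1..n}" "j < b" "b < s j"
  shows "s b \<noteq> b"
proof
  assume sb: "s b = b"
  obtain k where k: "k \<in> {1..n}" "k > b" "s k \<le> b"
    using gap_ex1[OF av321_perm[OF a], of b j] jb by auto
  have "s k \<noteq> b" using permutes_inj[OF av321_perm[OF a]] sb k(2) by (metis less_irrefl injD)
  then show False using av321_no[OF a jb(1,2) k(1) jb(3) k(2)] sb jb k by linarith
qed

lemma preimage_single:
  assumes s: "s permutes {1..n}" and b: "b \<in> {1..n}"
  shows "card {j\<in>{1..n}. s j = b \<and> P j} = (if P (inv s b) then 1 else 0)"
proof -
  have ib: "inv s b \<in> {1..n}" using b permutes_in_image[OF permutes_inv[OF s]] by auto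
  have sb: "s (inv s b) = b" using permutes_inverses(1)[OF s] by simp
  have "{j\<in>{1..n}. s j = b \<and> P j} = (if P (inv s b) then {inv s b} else {})"
  proof -
    have "\<And>j. s j = b \<longleftrightarrow> j = inv s b" using sb permutes_inverses(2)[OF s] by metis
    then show ?thesis using ib by auto
  qed
  then show ?thesis by simp
qed

lemma per_b:
  assumes a: "s \<in> av321 n" and b: "b \<in> {1..n}"
  shows "card {j\<in>{1..n}. j < b \<and> b \<le> s j}
       = card {j\<in>{1..n}. j < b \<and> b < s j \<and> s j < s b}
       + card {j\<in>{1..n}. s b < s j \<and> s j \<le> b \<and> b < j}
       + (if inv s b < b then 1 else 0)"
proof -
  have s: "s permutes {1..n}" using av321_perm[OF a] .
  have inj: "inj s" using permutes_inj[OF s] .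
  have sin: "\<And>i. i \<in> {1..n} \<Longrightarrow> s i \<in> {1..n}" using permutes_in_image[OF s] by auto
  have ib: "inv s b \<in> {1..n}" using b permutes_in_image[OF permutes_inv[OF s]] by auto
  have sb: "s (inv s b) = b" using permutes_inverses(1)[OF s] by simp
  consider "s b > b" | "s b = b" | "s b < b" by linarith
  then show ?thesis
  proof cases
    case 1
    have low: "{j\<in>{1..n}. s b < s j \<and> s j \<le> b \<and> b < j} = {}" using 1 by auto
    have up: "{j\<in>{1..n}. j < b \<and> b < s j \<and> s j < s b} = {j\<in>{1..n}. j < b \<and> b < s j}"
      using M1[OF a _ b _ _ 1] by force
    have "{j\<in>{1..n}. j < b \<and> b \<le> s j} = {j\<in>{1..n}. j < b \<and> b < s j} \<union> {j\<in>{1..n}. s j = b \<and> j < b}"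
      by auto
    then have "card {j\<in>{1..n}. j < b \<and> b \<le> s j} = card {j\<in>{1..n}. j < b \<and> b < s j} + card {j\<in>{1..n}. s j = b \<and> j < b}"
      by (simp add: card_Un_disjoint disjoint_iff)
    then show ?thesis using low up preimage_single[OF s b, of "\<lambda>j. j < b"] by simp
  next
    case 2
    have ibb: "inv s b = b" using 2 inj sb by (metis injD)
    have cov: "{j\<in>{1..n}. j < b \<and> b \<le> s j} = {}"
    proof (rule ccontr)
      assume "{j\<in>{1..n}. j < b \<and> b \<le> s j} \<noteq> {}"
      then obtain j where j: "j \<in> {1..n}" "j < b" "b \<le> s j" by auto
      have "s j \<noteq> b" using 2 inj j(2) by (metis injD less_irrefl)
      then have "b < s j" using j by linarith
      then show False using F321[OF a j(1) b j(2)] 2 by simp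
    qed
    have up: "{j\<in>{1..n}. j < b \<and> b < s j \<and> s j < s b} = {}" using 2 by auto
    have low: "{j\<in>{1..n}. s b < s j \<and> s j \<le> b \<and> b < j} = {}" using 2 by auto
    show ?thesis unfolding cov up low using ibb by simp
  next
    case 3
    have ibb: "inv s b \<noteq> b" using 3 sb by auto
    have up: "{j\<in>{1..n}. j < b \<and> b < s j \<and> s j < s b} = {}" using 3 by auto
    define R where "R = {k\<in>{1..n}. k > b \<and> s k < b}"
    have fR: "finite R" unfolding R_def by simp
    have "b - 1 \<le> n" using b by auto
    have "card {j\<in>{1..n}. j < b \<and> b \<le> s j} = card {j\<in>{1..n}. j \<le> b - 1 \<and> s j > b - 1}"
      using b by (intro arg_cong[where f=card]) auto
    also have "\<dots> = card {k\<in>{1..n}. k > b - 1 \<and> s k \<le> b - 1}" using gap[OF s \<open>b - 1 \<le> n\<close>] .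
    also have "{k\<in>{1..n}. k > b - 1 \<and> s k \<le> b - 1} = insert b R"
      using b 3 unfolding R_def by auto
    also have "card (insert b R) = card R + 1" using fR by (simp add: R_def)
    finally have cov: "card {j\<in>{1..n}. j < b \<and> b \<le> s j} = card R + 1" .
    have "{j\<in>{1..n}. s b < s j \<and> s j \<le> b \<and> b < j} = R \<union> {j\<in>{1..n}. s j = b \<and> b < j}"
    proof -
      have "\<And>k. k \<in> R \<Longrightarrow> s b < s k"
        using M2[OF a b _ _ _] 3 unfolding R_def by force
      then show ?thesis using 3 unfolding R_def by fastforce
    qed
    moreover have "R \<inter> {j\<in>{1..n}. s j = b \<and> b < j} = {}" unfolding R_def by auto
    ultimately have low: "card {j\<in>{1..n}. s b < s j \<and> s j \<le> b \<and> b < j} = card R + (if b < inv s b then 1 else 0)"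
      using fR preimage_single[OF s b, of "\<lambda>j. b < j"] by (simp add: card_Un_disjoint)
    show ?thesis using cov low up ibb by auto
  qed
qed

lemma card_filter_sum:
  assumes "finite A" shows "card {x\<in>A. P x} = (\<Sum>x\<in>A. if P x then 1 else 0)"
proof -
  have "card {x\<in>A. P x} = (\<Sum>x\<in>{x\<in>A. P x}. 1)" by (rule card_eq_sum)
  also have "\<dots> = (\<Sum>x\<in>A. if P x then 1 else 0)" by (rule sum.inter_filter[OF assms])
  finally show ?thesis .
qed

lemma cros_exc:
  assumes a: "s \<in> av321 n"
  shows "cros n s + exc n s = (\<Sum>j\<in>{i\<in>{1..n}. s i > i}. s j - j)"
proof -
  have s: "s permutes {1..n}" using av321_perm[OF a] .
  have sin: "\<And>i. i \<in> {1..n} \<Longrightarrow> s i \<in> {1..n}" using permutes_in_image[OF s] by auto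
  define up where "up b = card {j\<in>{1..n}. j < b \<and> b < s j \<and> s j < s b}" for b
  define low where "low b = card {j\<in>{1..n}. s b < s j \<and> s j \<le> b \<and> b < j}" for b
  define cov where "cov b = card {j\<in>{1..n}. j < b \<and> b \<le> s j}" for b
  have c1: "cros n s = (\<Sum>b\<in>{1..n}. up b + low b)"
    unfolding cros_def
  proof (rule sum.cong[OF refl])
    fix b assume "b \<in> {1..n}"
    have "{j\<in>{1..n}. (j < b \<and> b < s j \<and> s j < s b) \<or> (s b < s j \<and> s j \<le> b \<and> b < j)}
       = {j\<in>{1..n}. j < b \<and> b < s j \<and> s j < s b} \<union> {j\<in>{1..n}. s b < s j \<and> s j \<le> b \<and> b < j}"
      by auto
    then show "card {j\<in>{1..n}. (j < b \<and> b < s j \<and> s j < s b) \<or> (s b < s j \<and> s j \<le> b \<and> b < j)} = up b + low b"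
      unfolding up_def low_def by (simp add: card_Un_disjoint disjoint_iff)
  qed
  have bij: "bij_betw s {i\<in>{1..n}. s i > i} {b\<in>{1..n}. inv s b < b}"
  proof (rule bij_betw_imageI)
    show "inj_on s {i\<in>{1..n}. s i > i}" using permutes_inj[OF s] by (auto intro: inj_on_subset)
    show "s ` {i\<in>{1..n}. s i > i} = {b\<in>{1..n}. inv s b < b}"
    proof
      show "s ` {i\<in>{1..n}. s i > i} \<subseteq> {b\<in>{1..n}. inv s b < b}"
        using sin permutes_inverses(2)[OF s] by auto
      show "{b\<in>{1..n}. inv s b < b} \<subseteq> s ` {i\<in>{1..n}. s i > i}"
      proof
        fix b assume b: "b \<in> {b\<in>{1..n}. inv s b < b}"
        have "inv s b \<in> {1..n}" using b permutes_in_image[OF permutes_inv[OF s]] by auto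
        moreover have "s (inv s b) = b" using permutes_inverses(1)[OF s] by simp
        ultimately show "b \<in> s ` {i\<in>{1..n}. s i > i}" using b by (intro image_eqI[of b s "inv s b"]) auto
      qed
    qed
  qed
  have c2: "exc n s = (\<Sum>b\<in>{1..n}. if inv s b < b then 1 else 0)"
    unfolding exc_def using bij_betw_same_card[OF bij] card_filter_sum[of "{1..n}" "\<lambda>b. inv s b < b"] by simp
  have c3: "(\<Sum>b\<in>{1..n}. cov b) = (\<Sum>b\<in>{1..n}. up b + low b) + (\<Sum>b\<in>{1..n}. if inv s b < b then 1 else 0)"
    unfolding sum.distrib[symmetric] cov_def up_def low_def
  proof (rule sum.cong[OF refl])
    fix b assume "b \<in> {1..n}"
    from per_b[OF a this] show "card {j \<in> {1..n}. j < b \<and> b \<le> s j} =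
         card {j \<in> {1..n}. j < b \<and> b < s j \<and> s j < s b} + card {j \<in> {1..n}. s b < s j \<and> s j \<le> b \<and> b < j} +
         (if inv s b < b then 1 else 0)" .
  qed
  have "(\<Sum>b\<in>{1..n}. cov b) = (\<Sum>b\<in>{1..n}. \<Sum>j\<in>{1..n}. if j < b \<and> b \<le> s j then 1 else 0)"
    unfolding cov_def by (rule sum.cong[OF refl], rule card_filter_sum, simp)
  also have "\<dots> = (\<Sum>j\<in>{1..n}. \<Sum>b\<in>{1..n}. if j < b \<and> b \<le> s j then 1 else 0)"
    by (rule sum.swap)
  also have "\<dots> = (\<Sum>j\<in>{1..n}. if s j > j then s j - j else 0)"
  proof (rule sum.cong[OF refl])
    fix j assume j: "j \<in> {1..n}"
    have "{b\<in>{1..n}. j < b \<and> b \<le> s j} = {j<..s j}" using j sin[OF j] by auto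
    then show "(\<Sum>b\<in>{1..n}. if j < b \<and> b \<le> s j then 1 else 0) = (if s j > j then s j - j else 0)"
      using card_filter_sum[of "{1..n}" "\<lambda>b. j < b \<and> b \<le> s j"] by simp
  qed
  also have "\<dots> = (\<Sum>j\<in>{i\<in>{1..n}. s i > i}. s j - j)"
    by (rule sum.inter_filter[OF finite_atLeastAtMost, symmetric])
  finally show ?thesis using c1 c2 c3 by linarith
qed

definition Eo :: "nat \<Rightarrow> (nat \<Rightarrow> nat) \<Rightarrow> nat set" where
  "Eo n s = {i\<in>{1..n}. s i > i}"

definition valid :: "nat \<Rightarrow> nat set \<Rightarrow> nat set \<Rightarrow> bool" where
  "valid n E V \<longleftrightarrow> E \<subseteq> {1..n} \<and> V \<subseteq> {1..n} \<and> card E = card V \<and>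
     (\<forall>a\<in>{1..n}. card (V \<inter> {..a}) \<le> card (E \<inter> {..<a}))"

definition fc :: "nat \<Rightarrow> nat set \<Rightarrow> nat set \<Rightarrow> nat" where
  "fc n E V = card {a\<in>{1..n}. a \<notin> E \<and> a \<notin> V \<and> card (E \<inter> {..<a}) = card (V \<inter> {..<a})}"

lemma V_char:
  assumes s: "s permutes {1..n}"
  shows "s ` Eo n s = {b\<in>{1..n}. inv s b < b}"
proof
  have sin: "\<And>i. i \<in> {1..n} \<Longrightarrow> s i \<in> {1..n}" using permutes_in_image[OF s] by auto
  show "s ` Eo n s \<subseteq> {b\<in>{1..n}. inv s b < b}"
    using sin permutes_inverses(2)[OF s] unfolding Eo_def by auto
  show "{b\<in>{1..n}. inv s b < b} \<subseteq> s ` Eo n s"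
  proof
    fix b assume b: "b \<in> {b\<in>{1..n}. inv s b < b}"
    have "inv s b \<in> {1..n}" using b permutes_in_image[OF permutes_inv[OF s]] by auto
    moreover have "s (inv s b) = b" using permutes_inverses(1)[OF s] by simp
    ultimately show "b \<in> s ` Eo n s" using b unfolding Eo_def by (intro image_eqI[of b s "inv s b"]) auto
  qed
qed

lemma weight_q:
  assumes a: "s \<in> av321 n"
  shows "cros n s + exc n s = (\<Sum>v\<in>s ` Eo n s. v) - (\<Sum>e\<in>Eo n s. e)"
proof -
  have s: "s permutes {1..n}" using av321_perm[OF a] .
  have "cros n s + exc n s = (\<Sum>j\<in>Eo n s. s j - j)" using cros_exc[OF a] unfolding Eo_def .
  also have "\<dots> = (\<Sum>j\<in>Eo n s. s j) - (\<Sum>j\<in>Eo n s. j)"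
    by (rule sum_subtractf_nat) (auto simp: Eo_def)
  also have "(\<Sum>j\<in>Eo n s. s j) = (\<Sum>v\<in>s ` Eo n s. v)"
    using sum.reindex[of s "Eo n s" "\<lambda>v. v"] permutes_inj[OF s] by (simp add: inj_on_subset)
  finally show ?thesis .
qed

lemma exc_E: "exc n s = card (Eo n s)"
  by (simp add: exc_def Eo_def)

lemma cpk_VE:
  assumes s: "s permutes {1..n}"
  shows "cpk n s = card (s ` Eo n s - Eo n s)"
proof -
  have "{x\<in>{1..n}. inv s x < x \<and> x > s x} = s ` Eo n s - Eo n s"
  proof -
    have "\<And>x. s x = x \<Longrightarrow> inv s x = x" using permutes_inverses(2)[OF s] by metis
    then show ?thesis unfolding V_char[OF s] by (auto simp: Eo_def) (metis less_irrefl nat_neq_iff)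
  qed
  then show ?thesis unfolding cpk_def by simp
qed

lemma valid_Eo:
  assumes s: "s permutes {1..n}"
  shows "valid n (Eo n s) (s ` Eo n s)"
proof -
  have sin: "\<And>i. i \<in> {1..n} \<Longrightarrow> s i \<in> {1..n}" using permutes_in_image[OF s] by auto
  have inj: "inj s" using permutes_inj[OF s] .
  have "card (s ` Eo n s) = card (Eo n s)" using inj by (simp add: card_image inj_on_subset)
  moreover have "card (s ` Eo n s \<inter> {..a}) \<le> card (Eo n s \<inter> {..<a})" for a
  proof -
    have "inv s ` (s ` Eo n s \<inter> {..a}) \<subseteq> Eo n s \<inter> {..<a}"
      using permutes_inverses(2)[OF s] unfolding Eo_def by auto
    moreover have "inj_on (inv s) (s ` Eo n s \<inter> {..a})"
      using permutes_inj[OF permutes_inv[OF s]] by (auto intro: inj_on_subset)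
    ultimately show ?thesis by (metis card_inj_on_le finite_Int finite_lessThan)
  qed
  ultimately show ?thesis unfolding valid_def using sin by (auto simp: Eo_def)
qed

lemma fix_fc:
  assumes a: "s \<in> av321 n"
  shows "fixp n s = fc n (Eo n s) (s ` Eo n s)"
proof -
  have s: "s permutes {1..n}" using av321_perm[OF a] .
  have sin: "\<And>i. i \<in> {1..n} \<Longrightarrow> s i \<in> {1..n}" using permutes_in_image[OF s] by auto
  have inj: "inj s" using permutes_inj[OF s] .
  have is1: "\<And>x. inv s (s x) = x" using permutes_inverses(2)[OF s] .
  have is2: "\<And>x. s (inv s x) = x" using permutes_inverses(1)[OF s] .
  let ?E = "Eo n s" and ?V = "s ` Eo n s"
  have "{i\<in>{1..n}. s i = i} = {a\<in>{1..n}. a \<notin> ?E \<and> a \<notin> ?V \<and> card (?E \<inter> {..<a}) = card (?V \<inter> {..<a})}"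
  proof (rule set_eqI, rule iffI)
    fix a assume "a \<in> {i\<in>{1..n}. s i = i}"
    then have a1: "a \<in> {1..n}" and sa: "s a = a" by auto
    have nE: "a \<notin> ?E" using sa by (auto simp: Eo_def)
    have nV: "a \<notin> ?V" using sa is1 unfolding V_char[OF s] by (metis less_irrefl mem_Collect_eq)
    have "s ` (?E \<inter> {..<a}) = ?V \<inter> {..<a}"
    proof
      show "s ` (?E \<inter> {..<a}) \<subseteq> ?V \<inter> {..<a}"
      proof
        fix y assume "y \<in> s ` (?E \<inter> {..<a})"
        then obtain j where j: "j \<in> ?E" "j < a" "y = s j" by auto
        have "s j \<noteq> a" using sa j(2) inj by (metis injD less_irrefl)
        moreover have "\<not> a < s j"
        proof
          assume "a < s j"
          then show False using F321[OF a _ a1 j(2)] j(1) sa by (auto simp: Eo_def)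
        qed
        ultimately show "y \<in> ?V \<inter> {..<a}" using j by auto
      qed
      show "?V \<inter> {..<a} \<subseteq> s ` (?E \<inter> {..<a})"
        by (auto simp: Eo_def)
    qed
    then have "card (?E \<inter> {..<a}) = card (?V \<inter> {..<a})"
      by (metis card_image inj inj_on_subset subset_UNIV)
    then show "a \<in> {a\<in>{1..n}. a \<notin> ?E \<and> a \<notin> ?V \<and> card (?E \<inter> {..<a}) = card (?V \<inter> {..<a})}"
      using a1 nE nV by auto
  next
    fix a assume "a \<in> {a\<in>{1..n}. a \<notin> ?E \<and> a \<notin> ?V \<and> card (?E \<inter> {..<a}) = card (?V \<inter> {..<a})}"
    then have a1: "a \<in> {1..n}" and nE: "a \<notin> ?E" and nV: "a \<notin> ?V"
      and eq: "card (?E \<inter> {..<a}) = card (?V \<inter> {..<a})" by auto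
    have le: "s a \<le> a" using nE a1 by (auto simp: Eo_def)
    have "s a = a"
    proof (rule ccontr)
      assume "s a \<noteq> a"
      then have lt: "s a < a" using le by simp
      have "inv s a \<noteq> a" using \<open>s a \<noteq> a\<close> is2 by metis
      moreover have "\<not> inv s a < a" using nV a1 unfolding V_char[OF s] by auto
      ultimately have ia: "inv s a > a" by simp
      have p1: "a - 1 \<le> n" using a1 by auto
      have p2: "s a \<le> a - 1" using lt by auto
      have p3: "a > a - 1" using a1 by auto
      obtain j where j: "j \<in> {1..n}" "j \<le> a - 1" "s j > a - 1"
        using gap_ex2[OF s p1 a1 p3 p2] by blast
      have "s j \<noteq> a" using ia is1 j a1 by (metis diff_le_self leD le_less_trans)
      then have jE: "j \<in> ?E \<inter> {..<a}" using j a1 by (auto simp: Eo_def)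
      have sub: "inv s ` (?V \<inter> {..<a}) \<subseteq> ?E \<inter> {..<a}"
        using is1 unfolding Eo_def by auto
      have injv: "inj_on (inv s) (?V \<inter> {..<a})"
        using permutes_inj[OF permutes_inv[OF s]] by (auto intro: inj_on_subset)
      have "card (inv s ` (?V \<inter> {..<a})) = card (?E \<inter> {..<a})"
        using card_image[OF injv] eq by simp
      then have "inv s ` (?V \<inter> {..<a}) = ?E \<inter> {..<a}"
        using sub by (intro card_subset_eq) auto
      then obtain v where v: "v \<in> ?V" "v < a" "j = inv s v" using jE by blast
      then have "s j < a" using is2 by simp
      then show False using \<open>s j \<noteq> a\<close> j(3) by linarith
    qed
    then show "a \<in> {i\<in>{1..n}. s i = i}" using a1 by simp
  qed
  then show ?thesis unfolding fixp_def fc_def by simp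
qed

lemma mono_unique_aux:
  fixes f g :: "nat \<Rightarrow> nat"
  assumes f: "strict_mono_on C f" and g: "strict_mono_on C g" and im: "f ` C = g ` C"
    and a: "a \<in> C" and below: "\<forall>b\<in>C. b < a \<longrightarrow> f b = g b" and lt: "f a < g a"
  shows False
proof -
  have "f a \<in> g ` C" using im a by blast
  then obtain b where b: "b \<in> C" "f a = g b" by auto
  consider "b < a" | "b = a" | "a < b" by linarith
  then show False
  proof cases
    case 1
    then have "f b = f a" using below b by simp
    moreover have "f b < f a" using strict_mono_onD[OF f b(1) a 1] .
    ultimately show False by simp
  next
    case 2 then show False using b lt by simp
  next
    case 3
    have "g a < g b" using strict_mono_onD[OF g a b(1) 3] .
    then show False using b lt by simp
  qed
qed

lemma mono_unique:
  fixes f g :: "nat \<Rightarrow> nat"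
  assumes f: "strict_mono_on C f" and g: "strict_mono_on C g" and im: "f ` C = g ` C"
  shows "\<forall>x\<in>C. f x = g x"
proof (rule ccontr)
  assume "\<not> (\<forall>x\<in>C. f x = g x)"
  then have ex: "\<exists>x. x \<in> C \<and> f x \<noteq> g x" by auto
  define a where "a = (LEAST x. x \<in> C \<and> f x \<noteq> g x)"
  have a: "a \<in> C" "f a \<noteq> g a" using LeastI_ex[OF ex] unfolding a_def by auto
  have below: "\<forall>b\<in>C. b < a \<longrightarrow> f b = g b"
    using not_less_Least unfolding a_def by blast
  show False
  proof (cases "f a < g a")
    case True
    then show False using mono_unique_aux[OF f g im a(1) below] by simp
  next
    case False
    then have "g a < f a" using a(2) by simp
    then show False using mono_unique_aux[OF g f im[symmetric] a(1)] below by auto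
  qed
qed

lemma av321_mono_E:
  assumes a: "s \<in> av321 n"
  shows "strict_mono_on (Eo n s) s"
  unfolding strict_mono_on_def using M1[OF a] by (auto simp: Eo_def)

lemma av321_mono_C:
  assumes a: "s \<in> av321 n"
  shows "strict_mono_on ({1..n} - Eo n s) s"
  unfolding strict_mono_on_def using M2[OF a] by (auto simp: Eo_def not_less)

lemma av321_inj:
  assumes a1: "s1 \<in> av321 n" and a2: "s2 \<in> av321 n"
    and E: "Eo n s1 = Eo n s2" and V: "s1 ` Eo n s1 = s2 ` Eo n s2"
  shows "s1 = s2"
proof
  fix x
  have p1: "s1 permutes {1..n}" using av321_perm[OF a1] .
  have p2: "s2 permutes {1..n}" using av321_perm[OF a2] .
  have e1: "\<forall>x\<in>Eo n s1. s1 x = s2 x"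
    using mono_unique[OF av321_mono_E[OF a1], of s2] av321_mono_E[OF a2] E V by simp
  have c1: "s1 ` ({1..n} - Eo n s1) = {1..n} - s1 ` Eo n s1"
    using image_set_diff[OF permutes_inj[OF p1]] permutes_image[OF p1] by simp
  have c2: "s2 ` ({1..n} - Eo n s2) = {1..n} - s2 ` Eo n s2"
    using image_set_diff[OF permutes_inj[OF p2]] permutes_image[OF p2] by simp
  have e2: "\<forall>x\<in>{1..n} - Eo n s1. s1 x = s2 x"
    using mono_unique[OF av321_mono_C[OF a1], of s2] av321_mono_C[OF a2] E V c1 c2 by simp
  show "s1 x = s2 x"
  proof (cases "x \<in> {1..n}")
    case True then show ?thesis using e1 e2 by blast
  next
    case False then show ?thesis using permutes_not_in[OF p1] permutes_not_in[OF p2] by simp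
  qed
qed

lemma exists_mono_bij:
  fixes A B :: "nat set"
  shows "finite A \<Longrightarrow> finite B \<Longrightarrow> card A = card B \<Longrightarrow> \<exists>f. bij_betw f A B \<and> strict_mono_on A f"
proof (induction "card A" arbitrary: A B)
  case 0
  then have "A = {}" "B = {}" by auto
  then show ?case by (auto simp: strict_mono_on_def)
next
  case (Suc k)
  then have ne: "A \<noteq> {}" "B \<noteq> {}" by auto
  define a where "a = Max A"
  define b where "b = Max B"
  have aA: "a \<in> A" using Max_in[OF Suc.prems(1) ne(1)] a_def by simp
  have bB: "b \<in> B" using Max_in[OF Suc.prems(2) ne(2)] b_def by simp
  have "k = card (A - {a})" using Suc.hyps(2) aA Suc.prems(1) by simp
  moreover have "card (A - {a}) = card (B - {b})" using Suc.prems aA bB by simp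
  ultimately obtain f' where f': "bij_betw f' (A - {a}) (B - {b})" "strict_mono_on (A - {a}) f'"
    using Suc.hyps(1)[of "A - {a}" "B - {b}"] Suc.prems by auto
  define f where "f = f'(a := b)"
  have "bij_betw f (A - {a}) (B - {b})"
    using f'(1) unfolding f_def by (rule bij_betw_cong[THEN iffD1, rotated]) auto
  moreover have "bij_betw f {a} {b}" unfolding f_def by (simp add: bij_betw_def)
  ultimately have "bij_betw f ((A - {a}) \<union> {a}) ((B - {b}) \<union> {b})"
    by (rule bij_betw_combine) auto
  moreover have "(A - {a}) \<union> {a} = A" "(B - {b}) \<union> {b} = B" using aA bB by auto
  ultimately have bij: "bij_betw f A B" by simp
  have "strict_mono_on A f"
    unfolding strict_mono_on_def
  proof (intro allI impI)
    fix x y assume xy: "x \<in> A \<and> y \<in> A \<and> x < y"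
    have ya: "y \<le> a" using xy Suc.prems(1) a_def by simp
    then have xa: "x \<noteq> a" using xy by auto
    show "f x < f y"
    proof (cases "y = a")
      case True
      have "f' x \<in> B - {b}" using f'(1) xy xa by (auto simp: bij_betw_def)
      then have "f' x < b" using Suc.prems(2) b_def by (metis DiffE Max_ge insertCI le_neq_implies_less)
      then show ?thesis using True xa unfolding f_def by simp
    next
      case False
      then show ?thesis using f'(2) xy xa unfolding f_def strict_mono_on_def by auto
    qed
  qed
  then show ?case using bij by blast
qed

lemma card_below_compl:
  fixes V :: "nat set"
  assumes "V \<subseteq> {1..n}" "i \<le> n"
  shows "card (({1..n} - V) \<inter> {..i}) = i - card (V \<inter> {..i})"
proof -
  have "({1..n} - V) \<inter> {..i} = {1..i} - (V \<inter> {..i})" using assms by auto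
  moreover have "V \<inter> {..i} \<subseteq> {1..i}" using assms by auto
  ultimately show ?thesis by (simp add: card_Diff_subset finite_subset)
qed

lemma construct:
  assumes v: "valid n E V"
  shows "\<exists>s\<in>av321 n. Eo n s = E \<and> s ` Eo n s = V"
proof -
  have EV: "E \<subseteq> {1..n}" "V \<subseteq> {1..n}" "card E = card V"
    and vb: "\<And>a. a \<in> {1..n} \<Longrightarrow> card (V \<inter> {..a}) \<le> card (E \<inter> {..<a})"
    using v unfolding valid_def by auto
  have fE: "finite E" "finite V" using EV finite_subset by auto
  obtain f where f: "bij_betw f E V" "strict_mono_on E f"
    using exists_mono_bij[OF fE EV(3)] by blast
  have cc: "card ({1..n} - E) = card ({1..n} - V)"
    using EV by (simp add: card_Diff_subset finite_subset)
  obtain g where g: "bij_betw g ({1..n} - E) ({1..n} - V)" "strict_mono_on ({1..n} - E) g"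
    using exists_mono_bij[OF _ _ cc] by auto
  define s where "s i = (if i \<in> E then f i else if i \<in> {1..n} then g i else i)" for i
  have fgt: "f e > e" if e: "e \<in> E" for e
  proof (rule ccontr)
    assume "\<not> f e > e"
    then have fe: "f e \<le> e" by simp
    have feV: "f e \<in> V" using f(1) e by (auto simp: bij_betw_def)
    have sub: "f ` (E \<inter> {..e}) \<subseteq> V \<inter> {..f e}"
    proof (rule image_subsetI)
      fix x assume x: "x \<in> E \<inter> {..e}"
      have "f x \<le> f e"
      proof (cases "x = e")
        case False
        then have "x < e" using x by auto
        then show ?thesis using strict_mono_onD[OF f(2), of x e] x e by simp
      qed simp
      moreover have "f x \<in> V" using f(1) x by (auto intro: bij_betw_apply)
      ultimately show "f x \<in> V \<inter> {..f e}" by simp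
    qed
    have injf: "inj_on f (E \<inter> {..e})" using f(1) by (auto simp: bij_betw_def intro: inj_on_subset)
    have 1: "card (E \<inter> {..e}) \<le> card (V \<inter> {..f e})"
      by (rule card_inj_on_le[OF injf sub]) simp
    have 2: "card (V \<inter> {..f e}) \<le> card (E \<inter> {..<f e})" using vb feV EV by auto
    have 3: "card (E \<inter> {..<f e}) \<le> card (E \<inter> {..<e})"
      using fe by (intro card_mono) auto
    have 4: "card (E \<inter> {..<e}) < card (E \<inter> {..e})"
      using e by (intro psubset_card_mono) auto
    show False using 1 2 3 4 by linarith
  qed
  have gle: "g i \<le> i" if i: "i \<in> {1..n} - E" for i
  proof (rule ccontr)
    assume "\<not> g i \<le> i"
    then have gi: "g i > i" by simp
    have "({1..n} - V) \<inter> {..i} \<subseteq> g ` (({1..n} - E) \<inter> {..<i})"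
    proof
      fix w assume w: "w \<in> ({1..n} - V) \<inter> {..i}"
      have "w \<in> g ` ({1..n} - E)" using w g(1) unfolding bij_betw_def by auto
      then obtain i' where i': "i' \<in> {1..n} - E" "w = g i'" by blast
      have "i' < i"
      proof (rule ccontr)
        assume "\<not> i' < i"
        then have "i \<le> i'" by simp
        then have "g i \<le> g i'" using strict_mono_onD[OF g(2) i i'(1)] by (cases "i = i'") auto
        then show False using w i' gi by auto
      qed
      then show "w \<in> g ` (({1..n} - E) \<inter> {..<i})" using i' by auto
    qed
    then have "card (({1..n} - V) \<inter> {..i}) \<le> card (g ` (({1..n} - E) \<inter> {..<i}))"
      by (rule card_mono[rotated]) simp
    also have "\<dots> \<le> card (({1..n} - E) \<inter> {..<i})" by (rule card_image_le) simp
    also have "\<dots> < card (({1..n} - E) \<inter> {..i})"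
    proof (rule psubset_card_mono)
      have "i \<in> ({1..n} - E) \<inter> {..i}" using i by simp
      moreover have "i \<notin> ({1..n} - E) \<inter> {..<i}" by simp
      moreover have "({1..n} - E) \<inter> {..<i} \<subseteq> ({1..n} - E) \<inter> {..i}" by auto
      ultimately show "({1..n} - E) \<inter> {..<i} \<subset> ({1..n} - E) \<inter> {..i}"
        by blast
    qed simp
    finally have lt: "card (({1..n} - V) \<inter> {..i}) < card (({1..n} - E) \<inter> {..i})" .
    have i1: "i \<in> {1..n}" using i by simp
    then have "i \<le> n" by simp
    have c1: "card (({1..n} - V) \<inter> {..i}) = i - card (V \<inter> {..i})"
      by (rule card_below_compl[OF EV(2) \<open>i \<le> n\<close>])
    have c2: "card (({1..n} - E) \<inter> {..i}) = i - card (E \<inter> {..i})"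
      by (rule card_below_compl[OF EV(1) \<open>i \<le> n\<close>])
    have lt2: "i - card (V \<inter> {..i}) < i - card (E \<inter> {..i})"
      using lt unfolding c1 c2 .
    have "card (V \<inter> {..i}) \<le> card (E \<inter> {..<i})" by (rule vb[OF i1])
    also have "\<dots> \<le> card (E \<inter> {..i})" by (rule card_mono) auto
    finally show False using lt2 by linarith
  qed
  have sE: "\<And>i. i \<in> E \<Longrightarrow> s i = f i" and sC: "\<And>i. i \<in> {1..n} - E \<Longrightarrow> s i = g i"
    unfolding s_def by auto
  have bs: "bij_betw s {1..n} {1..n}"
  proof -
    have "bij_betw s E V \<longleftrightarrow> bij_betw f E V" by (rule bij_betw_cong) (simp add: sE)
    then have "bij_betw s E V" using f(1) by simp
    moreover have "bij_betw s ({1..n} - E) ({1..n} - V) \<longleftrightarrow> bij_betw g ({1..n} - E) ({1..n} - V)"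
      by (rule bij_betw_cong) (simp add: sC)
    then have "bij_betw s ({1..n} - E) ({1..n} - V)" using g(1) by simp
    ultimately have "bij_betw s (E \<union> ({1..n} - E)) (V \<union> ({1..n} - V))"
      by (rule bij_betw_combine) auto
    moreover have "E \<union> ({1..n} - E) = {1..n}" "V \<union> ({1..n} - V) = {1..n}" using EV by auto
    ultimately show ?thesis by simp
  qed
  have sp: "s permutes {1..n}"
    by (rule bij_imp_permutes[OF bs]) (use EV in \<open>auto simp: s_def\<close>)
  have mE: "s i < s j" if "i \<in> E" "j \<in> E" "i < j" for i j
    using strict_mono_onD[OF f(2) that] sE that by simp
  have mC: "s i < s j" if "i \<in> {1..n} - E" "j \<in> {1..n} - E" "i < j" for i j
    using strict_mono_onD[OF g(2) that] sC that by simp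
  have av: "s \<in> av321 n"
    unfolding av321_def
  proof (intro CollectI conjI sp notI)
    assume "\<exists>i\<in>{1..n}. \<exists>j\<in>{1..n}. \<exists>k\<in>{1..n}. i < j \<and> j < k \<and> s j < s i \<and> s k < s j"
    then obtain i j k where ijk: "i \<in> {1..n}" "j \<in> {1..n}" "k \<in> {1..n}" "i < j" "j < k" "s j < s i" "s k < s j"
      by blast
    have nij: "(i \<in> E) \<noteq> (j \<in> E)"
      using mE[of i j] mC[of i j] ijk by auto
    have njk: "(j \<in> E) \<noteq> (k \<in> E)"
      using mE[of j k] mC[of j k] ijk by auto
    have "i < k" using ijk by simp
    then have nik: "(i \<in> E) \<noteq> (k \<in> E)"
      using mE[of i k] mC[of i k] ijk by auto
    show False using nij njk nik by auto
  qed
  have EoE: "Eo n s = E"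
  proof
    show "Eo n s \<subseteq> E"
    proof
      fix x assume x: "x \<in> Eo n s"
      show "x \<in> E"
      proof (rule ccontr)
        assume "x \<notin> E"
        then have "x \<in> {1..n} - E" using x by (auto simp: Eo_def)
        then show False using gle[of x] sC[of x] x by (auto simp: Eo_def)
      qed
    qed
    show "E \<subseteq> Eo n s" using fgt sE EV unfolding Eo_def by auto
  qed
  have "s ` E = V" using f(1) sE by (auto simp: bij_betw_def)
  then show ?thesis using av EoE by auto
qed

definition validUD :: "nat \<Rightarrow> nat set \<Rightarrow> nat set \<Rightarrow> bool" where
  "validUD n U D \<longleftrightarrow> U \<subseteq> {1..n} \<and> D \<subseteq> {1..n} \<and> U \<inter> D = {} \<and> card U = card D \<and>
     (\<forall>a\<in>{1..n}. card (D \<inter> {..a}) \<le> card (U \<inter> {..<a}))"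

definition Lset :: "nat \<Rightarrow> nat set \<Rightarrow> nat set \<Rightarrow> nat set" where
  "Lset n U D = {a\<in>{1..n}. a \<notin> U \<and> a \<notin> D \<and> card (D \<inter> {..<a}) < card (U \<inter> {..<a})}"

definition Fset :: "nat \<Rightarrow> nat set \<Rightarrow> nat set \<Rightarrow> nat set" where
  "Fset n U D = {a\<in>{1..n}. a \<notin> U \<and> a \<notin> D \<and> card (U \<inter> {..<a}) = card (D \<inter> {..<a})}"

lemma sum_pow_card: "finite A \<Longrightarrow> (\<Sum>X\<in>Pow A. (a::real) ^ card X) = (1 + a) ^ card A"
  using prod_add[of A "\<lambda>_. a" "\<lambda>_. 1"] by (simp add: add.commute)

lemma cUn:
  assumes "X \<inter> Y = {}" "finite M"
  shows "card ((X \<union> Y) \<inter> M) = card (X \<inter> M) + card (Y \<inter> M)"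
proof -
  have "(X \<union> Y) \<inter> M = (X \<inter> M) \<union> (Y \<inter> M)" by auto
  moreover have "(X \<inter> M) \<inter> (Y \<inter> M) = {}" using assms(1) by auto
  ultimately show ?thesis using assms(2) by (simp add: card_Un_disjoint)
qed

lemma L_disj: "S \<subseteq> Lset n U D \<Longrightarrow> S \<inter> U = {} \<and> S \<inter> D = {} \<and> S \<subseteq> {1..n}"
  unfolding Lset_def by auto

lemma psi_into:
  assumes v: "validUD n U D" and S: "S \<subseteq> Lset n U D"
  shows "valid n (U \<union> S) (D \<union> S)"
proof -
  have v1: "U \<subseteq> {1..n}" "D \<subseteq> {1..n}" "U \<inter> D = {}" "card U = card D"
    and v2: "\<And>a. a \<in> {1..n} \<Longrightarrow> card (D \<inter> {..a}) \<le> card (U \<inter> {..<a})"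
    using v unfolding validUD_def by auto
  have d: "S \<inter> U = {}" "S \<inter> D = {}" "S \<subseteq> {1..n}" using L_disj[OF S] by auto
  have fin: "finite U" "finite D" "finite S"
    using v1(1,2) d(3) finite_subset[OF _ finite_atLeastAtMost] by blast+
  have "card (U \<union> S) = card (D \<union> S)"
    using fin d v1 by (simp add: card_Un_disjoint Int_commute)
  moreover have "card ((D \<union> S) \<inter> {..a}) \<le> card ((U \<union> S) \<inter> {..<a})" if a: "a \<in> {1..n}" for a
  proof -
    have e1: "card ((D \<union> S) \<inter> {..a}) = card (D \<inter> {..a}) + card (S \<inter> {..a})"
      by (rule cUn) (use d in auto)
    have e2: "card ((U \<union> S) \<inter> {..<a}) = card (U \<inter> {..<a}) + card (S \<inter> {..<a})"
      by (rule cUn) (use d in auto)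
    show ?thesis
    proof (cases "a \<in> S")
      case True
      have "S \<inter> {..a} = insert a (S \<inter> {..<a})" using True by auto
      then have c1: "card (S \<inter> {..a}) = card (S \<inter> {..<a}) + 1" by simp
      have "a \<notin> D" using True d by auto
      then have "D \<inter> {..a} = D \<inter> {..<a}" using le_neq_implies_less by fastforce
      moreover have "card (D \<inter> {..<a}) < card (U \<inter> {..<a})" using True S unfolding Lset_def by auto
      ultimately show ?thesis using e1 e2 c1 by simp
    next
      case False
      then have "S \<inter> {..a} = S \<inter> {..<a}" using le_neq_implies_less by fastforce
      then show ?thesis using e1 e2 v2[OF a] by simp
    qed
  qed
  ultimately show ?thesis unfolding valid_def using v1 d by auto
qed

lemma psi_onto:
  assumes v: "valid n E V"
  shows "validUD n (E - V) (V - E) \<and> E \<inter> V \<subseteq> Lset n (E - V) (V - E)"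
proof -
  have v1: "E \<subseteq> {1..n}" "V \<subseteq> {1..n}" "card E = card V"
    and v2: "\<And>a. a \<in> {1..n} \<Longrightarrow> card (V \<inter> {..a}) \<le> card (E \<inter> {..<a})"
    using v unfolding valid_def by auto
  have fin: "finite E" "finite V"
    using v1(1,2) finite_subset[OF _ finite_atLeastAtMost] by blast+
  have eE: "E = (E - V) \<union> (E \<inter> V)" and eV: "V = (V - E) \<union> (E \<inter> V)" by auto
  have dE: "(E - V) \<inter> (E \<inter> V) = {}" and dV: "(V - E) \<inter> (E \<inter> V) = {}" by auto
  have cE: "card E = card (E - V) + card (E \<inter> V)" using fin card_Un_disjoint[OF _ _ dE] eE by (metis finite_Diff finite_Int)
  have cV: "card V = card (V - E) + card (E \<inter> V)" using fin card_Un_disjoint[OF _ _ dV] eV by (metis finite_Diff finite_Int)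
  have sE: "\<And>M. finite M \<Longrightarrow> card (E \<inter> M) = card ((E - V) \<inter> M) + card ((E \<inter> V) \<inter> M)"
    using cUn[OF dE] eE by metis
  have sV: "\<And>M. finite M \<Longrightarrow> card (V \<inter> M) = card ((V - E) \<inter> M) + card ((E \<inter> V) \<inter> M)"
    using cUn[OF dV] eV by metis
  have "card ((V - E) \<inter> {..a}) \<le> card ((E - V) \<inter> {..<a})" if a: "a \<in> {1..n}" for a
  proof -
    have "card ((E \<inter> V) \<inter> {..<a}) \<le> card ((E \<inter> V) \<inter> {..a})" by (rule card_mono) auto
    then show ?thesis using v2[OF a] sE[of "{..<a}"] sV[of "{..a}"] by simp
  qed
  then have "validUD n (E - V) (V - E)" unfolding validUD_def using v1 cE cV by auto
  moreover have "E \<inter> V \<subseteq> Lset n (E - V) (V - E)"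
  proof
    fix a assume a: "a \<in> E \<inter> V"
    then have a1: "a \<in> {1..n}" using v1 by auto
    have "V \<inter> {..a} = insert a (V \<inter> {..<a})" using a by auto
    then have "card (V \<inter> {..a}) = card (V \<inter> {..<a}) + 1" by simp
    moreover have "card (V \<inter> {..<a}) = card ((V - E) \<inter> {..<a}) + card ((E \<inter> V) \<inter> {..<a})" using sV by simp
    moreover have "card (E \<inter> {..<a}) = card ((E - V) \<inter> {..<a}) + card ((E \<inter> V) \<inter> {..<a})" using sE by simp
    ultimately have "card ((V - E) \<inter> {..<a}) < card ((E - V) \<inter> {..<a})" using v2[OF a1] by simp
    then show "a \<in> Lset n (E - V) (V - E)" unfolding Lset_def using a a1 by auto
  qed
  ultimately show ?thesis by simp
qed

lemma alg:
  fixes x t r :: real and n k l f :: nat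
  assumes h1: "1 + x \<noteq> 0" and h2: "x + t \<noteq> 0" and h3: "1 + x * t \<noteq> 0" and nn: "n = k + k + l + f"
  shows "((1 + x * t) / (1 + x)) ^ n * (((1 + x)^2 * t / ((x + t) * (1 + x * t))) ^ k
          * ((x + t) / (1 + x * t)) ^ k * ((1 + x) * r / (1 + x * t)) ^ f * (1 + (x + t) / (1 + x * t)) ^ l)
       = t ^ k * r ^ f * (1 + t) ^ l"
proof -
  define c where "c = (1 + x * t) / (1 + x)"
  define \<alpha> where "\<alpha> = (1 + x)^2 * t / ((x + t) * (1 + x * t))"
  define \<beta> where "\<beta> = (x + t) / (1 + x * t)"
  define \<gamma> where "\<gamma> = (1 + x) * r / (1 + x * t)"
  have h2': "t + x \<noteq> 0" using h2 by (simp add: add.commute)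
  have h3': "1 + t * x \<noteq> 0" using h3 by (simp add: mult.commute)
  have e1: "c * c * \<alpha> * \<beta> = t" unfolding c_def \<alpha>_def \<beta>_def using h1 h2 h3 h2' h3'
    by (simp add: power2_eq_square)
  have e2: "c * \<gamma> = r" unfolding c_def \<gamma>_def using h1 h3 h3' by simp
  have b1: "1 + \<beta> = ((1 + x) * (1 + t)) / (1 + x * t)"
  proof -
    have "(1 + x) * (1 + t) = (1 + x * t) + (x + t)" by (simp add: algebra_simps)
    then have "((1 + x) * (1 + t)) / (1 + x * t) = (1 + x * t) / (1 + x * t) + (x + t) / (1 + x * t)"
      by (simp add: add_divide_distrib)
    then show ?thesis using h3 unfolding \<beta>_def by simp
  qed
  have e3: "c * (1 + \<beta>) = 1 + t" unfolding b1 c_def using h1 h3 h3' by simp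
  have "c ^ n * (\<alpha> ^ k * \<beta> ^ k * \<gamma> ^ f * (1 + \<beta>) ^ l)
      = (c * c * \<alpha> * \<beta>) ^ k * (c * \<gamma>) ^ f * (c * (1 + \<beta>)) ^ l"
    unfolding nn by (simp add: power_add power_mult_distrib)
  also have "\<dots> = t ^ k * r ^ f * (1 + t) ^ l" using e1 e2 e3 by simp
  finally show ?thesis unfolding c_def \<alpha>_def \<beta>_def \<gamma>_def .
qed

definition psi :: "(nat set \<times> nat set) \<times> nat set \<Rightarrow> nat set \<times> nat set" where
  "psi p = (fst (fst p) \<union> snd p, snd (fst p) \<union> snd p)"

definition Dom :: "nat \<Rightarrow> ((nat set \<times> nat set) \<times> nat set) set" where
  "Dom n = (SIGMA UD:{UD. validUD n (fst UD) (snd UD)}. Pow (Lset n (fst UD) (snd UD)))"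

lemma finite_Q: "finite {UD. validUD n (fst UD) (snd UD)}"
proof (rule finite_subset)
  show "{UD. validUD n (fst UD) (snd UD)} \<subseteq> Pow {1..n} \<times> Pow {1..n}"
    unfolding validUD_def by auto
qed simp

lemma psi_bij: "bij_betw psi (Dom n) {p. valid n (fst p) (snd p)}"
proof (rule bij_betw_imageI)
  show "inj_on psi (Dom n)"
  proof (rule inj_onI)
    fix p p' assume p: "p \<in> Dom n" and p': "p' \<in> Dom n" and eq: "psi p = psi p'"
    obtain U D S where pp: "p = ((U, D), S)" by (metis prod.collapse)
    obtain U' D' S' where pp': "p' = ((U', D'), S')" by (metis prod.collapse)
    have v: "U \<inter> D = {}" "S \<subseteq> Lset n U D" using p pp unfolding Dom_def validUD_def by auto
    have v': "U' \<inter> D' = {}" "S' \<subseteq> Lset n U' D'" using p' pp' unfolding Dom_def validUD_def by auto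
    have d: "S \<inter> U = {}" "S \<inter> D = {}" using L_disj[OF v(2)] by auto
    have d': "S' \<inter> U' = {}" "S' \<inter> D' = {}" using L_disj[OF v'(2)] by auto
    have e1: "U \<union> S = U' \<union> S'" and e2: "D \<union> S = D' \<union> S'" using eq pp pp' unfolding psi_def by auto
    have "S = (U \<union> S) \<inter> (D \<union> S)" using v(1) d by auto
    also have "\<dots> = (U' \<union> S') \<inter> (D' \<union> S')" using e1 e2 by simp
    also have "\<dots> = S'" using v'(1) d' by auto
    finally have SS: "S = S'" .
    have "U = (U \<union> S) - S" using d by auto
    also have "\<dots> = U'" using e1 SS d' by auto
    finally have UU: "U = U'" .
    have "D = (D \<union> S) - S" using d by auto
    also have "\<dots> = D'" using e2 SS d' by auto
    finally have DD: "D = D'" .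
    show "p = p'" using pp pp' SS UU DD by simp
  qed
  show "psi ` Dom n = {p. valid n (fst p) (snd p)}"
  proof
    show "psi ` Dom n \<subseteq> {p. valid n (fst p) (snd p)}"
      using psi_into unfolding psi_def Dom_def by auto
    show "{p. valid n (fst p) (snd p)} \<subseteq> psi ` Dom n"
    proof
      fix p assume "p \<in> {p. valid n (fst p) (snd p)}"
      then obtain E V where pE: "p = (E, V)" and v: "valid n E V" by (metis mem_Collect_eq prod.collapse)
      have "((E - V, V - E), E \<inter> V) \<in> Dom n" using psi_onto[OF v] unfolding Dom_def by auto
      moreover have "psi ((E - V, V - E), E \<inter> V) = p" using pE unfolding psi_def by auto
      ultimately show "p \<in> psi ` Dom n" by force
    qed
  qed
qed

lemma UD_weights:
  assumes v: "validUD n U D" and S: "S \<subseteq> Lset n U D"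
  shows "(\<Sum>v\<in>D \<union> S. v) - (\<Sum>e\<in>U \<union> S. e) = (\<Sum>v\<in>D. v) - (\<Sum>e\<in>U. e)"
    and "card (U \<union> S) = card U + card S"
    and "card ((D \<union> S) - (U \<union> S)) = card D"
    and "fc n (U \<union> S) (D \<union> S) = card (Fset n U D)"
proof -
  have v1: "U \<subseteq> {1..n}" "D \<subseteq> {1..n}" "U \<inter> D = {}"
    using v unfolding validUD_def by auto
  have d: "S \<inter> U = {}" "S \<inter> D = {}" "S \<subseteq> {1..n}" using L_disj[OF S] by auto
  have fin: "finite U" "finite D" "finite S"
    using v1(1,2) d(3) finite_subset[OF _ finite_atLeastAtMost] by blast+
  have "(\<Sum>v\<in>D \<union> S. v) = (\<Sum>v\<in>D. v) + (\<Sum>v\<in>S. v)"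
    using fin d by (simp add: sum.union_disjoint Int_commute)
  moreover have "(\<Sum>v\<in>U \<union> S. v) = (\<Sum>v\<in>U. v) + (\<Sum>v\<in>S. v)"
    using fin d by (simp add: sum.union_disjoint Int_commute)
  ultimately show "(\<Sum>v\<in>D \<union> S. v) - (\<Sum>e\<in>U \<union> S. e) = (\<Sum>v\<in>D. v) - (\<Sum>e\<in>U. e)" by simp
  show "card (U \<union> S) = card U + card S" using fin d by (simp add: card_Un_disjoint Int_commute)
  have "(D \<union> S) - (U \<union> S) = D" using d v1 by auto
  then show "card ((D \<union> S) - (U \<union> S)) = card D" by simp
  have "{a\<in>{1..n}. a \<notin> U \<union> S \<and> a \<notin> D \<union> S \<and> card ((U \<union> S) \<inter> {..<a}) = card ((D \<union> S) \<inter> {..<a})}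
      = Fset n U D"
  proof -
    have cu: "card ((U \<union> S) \<inter> {..<a}) = card (U \<inter> {..<a}) + card (S \<inter> {..<a})" for a
      by (rule cUn) (use d in auto)
    have cd: "card ((D \<union> S) \<inter> {..<a}) = card (D \<inter> {..<a}) + card (S \<inter> {..<a})" for a
      by (rule cUn) (use d in auto)
    have "a \<notin> S" if "a \<in> Fset n U D" for a using that S unfolding Fset_def Lset_def by auto
    then show ?thesis unfolding Fset_def cu cd by auto
  qed
  then show "fc n (U \<union> S) (D \<union> S) = card (Fset n U D)" unfolding fc_def by simp
qed

lemma UD_partition:
  assumes v: "validUD n U D"
  shows "card U + card D + card (Lset n U D) + card (Fset n U D) = n"
proof -
  have v1: "U \<subseteq> {1..n}" "D \<subseteq> {1..n}" "U \<inter> D = {}"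
    and v2: "\<And>a. a \<in> {1..n} \<Longrightarrow> card (D \<inter> {..a}) \<le> card (U \<inter> {..<a})"
    using v unfolding validUD_def by auto
  have le: "card (D \<inter> {..<a}) \<le> card (U \<inter> {..<a})" if "a \<in> {1..n}" for a
  proof -
    have "card (D \<inter> {..<a}) \<le> card (D \<inter> {..a})" by (rule card_mono) auto
    then show ?thesis using v2[OF that] by simp
  qed
  let ?L = "Lset n U D" and ?F = "Fset n U D"
  have eq: "{1..n} = U \<union> D \<union> ?L \<union> ?F"
  proof
    show "{1..n} \<subseteq> U \<union> D \<union> ?L \<union> ?F"
    proof
      fix a assume a: "a \<in> {1..n}"
      show "a \<in> U \<union> D \<union> ?L \<union> ?F"
      proof (cases "a \<in> U \<or> a \<in> D")
        case True then show ?thesis by blast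
      next
        case False
        show ?thesis
        proof (cases "card (D \<inter> {..<a}) = card (U \<inter> {..<a})")
          case True
          then have "a \<in> ?F" using a False unfolding Fset_def by simp
          then show ?thesis by blast
        next
          case ne: False
          then have "card (D \<inter> {..<a}) < card (U \<inter> {..<a})" using le[OF a] by simp
          then have "a \<in> ?L" using a False unfolding Lset_def by simp
          then show ?thesis by blast
        qed
      qed
    qed
    show "U \<union> D \<union> ?L \<union> ?F \<subseteq> {1..n}" using v1 unfolding Lset_def Fset_def by blast
  qed
  have fU: "finite U" and fD: "finite D"
    using v1(1,2) finite_subset[OF _ finite_atLeastAtMost] by blast+
  have fL: "finite ?L" and fF: "finite ?F" unfolding Lset_def Fset_def by simp_all
  have d1: "U \<inter> D = {}" using v1 by simp
  have d2: "(U \<union> D) \<inter> ?L = {}" unfolding Lset_def by blast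
  have d3: "(U \<union> D \<union> ?L) \<inter> ?F = {}" unfolding Lset_def Fset_def by auto
  have "card (U \<union> D \<union> ?L \<union> ?F) = card (U \<union> D \<union> ?L) + card ?F"
    by (rule card_Un_disjoint) (use fU fD fL fF d3 in auto)
  also have "card (U \<union> D \<union> ?L) = card (U \<union> D) + card ?L"
    by (rule card_Un_disjoint) (use fU fD fL d2 in auto)
  also have "card (U \<union> D) = card U + card D"
    by (rule card_Un_disjoint) (use fU fD d1 in auto)
  finally have "card (U \<union> D \<union> ?L \<union> ?F) = card U + card D + card ?L + card ?F" .
  moreover have "card (U \<union> D \<union> ?L \<union> ?F) = n" unfolding eq[symmetric] by simp
  ultimately show ?thesis by simp
qed

theorem corollary3p11:
  fixes n :: nat and q t r x :: real
  assumes "n \<ge> 1" and "1 + x \<noteq> 0" and "x + t \<noteq> 0" and "1 + x * t \<noteq> 0"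
  shows "(\<Sum>\<sigma>\<in>av321 n. q ^ cros n \<sigma> * (t * q) ^ exc n \<sigma> * r ^ fixp n \<sigma>)
       = ((1 + x * t) / (1 + x)) ^ n *
         (\<Sum>\<sigma>\<in>av321 n. q ^ cros n \<sigma>
             * ((1 + x)^2 * t / ((x + t) * (1 + x * t))) ^ cpk n \<sigma>
             * (q * (x + t) / (1 + x * t)) ^ exc n \<sigma>
             * ((1 + x) * r / (1 + x * t)) ^ fixp n \<sigma>)"
proof -
  define P where "P = {p. valid n (fst p) (snd p)}"
  define Q where "Q = {UD. validUD n (fst UD) (snd UD)}"
  define Phi where "Phi s = (Eo n s, s ` Eo n s)" for s :: "nat \<Rightarrow> nat"
  define \<alpha> where "\<alpha> = (1 + x)^2 * t / ((x + t) * (1 + x * t))"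
  define \<beta> where "\<beta> = (x + t) / (1 + x * t)"
  define \<gamma> where "\<gamma> = (1 + x) * r / (1 + x * t)"
  define c where "c = (1 + x * t) / (1 + x)"
  define WL where "WL p = q ^ ((\<Sum>v\<in>snd p. v) - (\<Sum>e\<in>fst p. e)) * t ^ card (fst p) * r ^ fc n (fst p) (snd p)"
    for p :: "nat set \<times> nat set"
  define WR where "WR p = q ^ ((\<Sum>v\<in>snd p. v) - (\<Sum>e\<in>fst p. e)) * \<alpha> ^ card (snd p - fst p)
       * \<beta> ^ card (fst p) * \<gamma> ^ fc n (fst p) (snd p)"
    for p :: "nat set \<times> nat set"
  have bijPhi: "bij_betw Phi (av321 n) P"
  proof (rule bij_betw_imageI)
    show "inj_on Phi (av321 n)"
      by (rule inj_onI) (use av321_inj in \<open>auto simp: Phi_def\<close>)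
    show "Phi ` av321 n = P"
    proof
      show "Phi ` av321 n \<subseteq> P"
      proof
        fix p assume "p \<in> Phi ` av321 n"
        then obtain s where s: "s \<in> av321 n" "p = Phi s" by blast
        show "p \<in> P" using valid_Eo[OF av321_perm[OF s(1)]] s(2) unfolding P_def Phi_def by simp
      qed
      show "P \<subseteq> Phi ` av321 n"
      proof
        fix p assume "p \<in> P"
        then have "valid n (fst p) (snd p)" unfolding P_def by simp
        from construct[OF this] obtain s where s: "s \<in> av321 n" "Eo n s = fst p" "s ` Eo n s = snd p" by blast
        then have "Phi s = p" unfolding Phi_def by simp
        then show "p \<in> Phi ` av321 n" using s(1) by blast
      qed
    qed
  qed
  have L1: "(\<Sum>\<sigma>\<in>av321 n. q ^ cros n \<sigma> * (t * q) ^ exc n \<sigma> * r ^ fixp n \<sigma>) = (\<Sum>\<sigma>\<in>av321 n. WL (Phi \<sigma>))"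
  proof (rule sum.cong[OF refl])
    fix s assume a: "s \<in> av321 n"
    have "q ^ cros n s * (t * q) ^ exc n s = q ^ (cros n s + exc n s) * t ^ exc n s"
      by (simp add: power_add power_mult_distrib)
    then show "q ^ cros n s * (t * q) ^ exc n s * r ^ fixp n s = WL (Phi s)"
      unfolding WL_def Phi_def using weight_q[OF a] exc_E[of n s] fix_fc[OF a] by simp
  qed
  have R1: "(\<Sum>\<sigma>\<in>av321 n. q ^ cros n \<sigma>
             * ((1 + x)^2 * t / ((x + t) * (1 + x * t))) ^ cpk n \<sigma>
             * (q * (x + t) / (1 + x * t)) ^ exc n \<sigma>
             * ((1 + x) * r / (1 + x * t)) ^ fixp n \<sigma>) = (\<Sum>\<sigma>\<in>av321 n. WR (Phi \<sigma>))"
  proof (rule sum.cong[OF refl])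
    fix s assume a: "s \<in> av321 n"
    have qb: "q * (x + t) / (1 + x * t) = q * \<beta>" unfolding \<beta>_def by simp
    have "q ^ cros n s * \<alpha> ^ cpk n s * (q * \<beta>) ^ exc n s * \<gamma> ^ fixp n s
        = q ^ (cros n s + exc n s) * \<alpha> ^ cpk n s * \<beta> ^ exc n s * \<gamma> ^ fixp n s"
      by (simp add: power_add power_mult_distrib)
    then show "q ^ cros n s * ((1 + x)^2 * t / ((x + t) * (1 + x * t))) ^ cpk n s
             * (q * (x + t) / (1 + x * t)) ^ exc n s * ((1 + x) * r / (1 + x * t)) ^ fixp n s = WR (Phi s)"
      unfolding WR_def Phi_def qb \<alpha>_def[symmetric] \<gamma>_def[symmetric]
      using weight_q[OF a] exc_E[of n s] fix_fc[OF a] cpk_VE[OF av321_perm[OF a]] by simp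
  qed
  have finQ: "finite Q" unfolding Q_def by (rule finite_Q)
  have finL: "\<And>UD. finite (Pow (Lset n (fst UD) (snd UD)))" unfolding Lset_def by simp
  have sig: "(\<Sum>p\<in>P. W p) = (\<Sum>UD\<in>Q. \<Sum>S\<in>Pow (Lset n (fst UD) (snd UD)). W (psi (UD, S)))" for W
  proof -
    have "(\<Sum>p\<in>P. W p) = (\<Sum>z\<in>Dom n. W (psi z))"
      unfolding P_def by (rule sum.reindex_bij_betw[OF psi_bij, symmetric])
    also have "\<dots> = (\<Sum>UD\<in>Q. \<Sum>S\<in>Pow (Lset n (fst UD) (snd UD)). W (psi (UD, S)))"
      unfolding Dom_def Q_def[symmetric] by (subst sum.Sigma[OF finQ]) (use finL in auto)
    finally show ?thesis .
  qed
  define k where "k UD = card (fst UD)" for UD :: "nat set \<times> nat set"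
  define l where "l UD = card (Lset n (fst UD) (snd UD))" for UD :: "nat set \<times> nat set"
  define f where "f UD = card (Fset n (fst UD) (snd UD))" for UD :: "nat set \<times> nat set"
  define g where "g UD = q ^ ((\<Sum>v\<in>snd UD. v) - (\<Sum>e\<in>fst UD. e))" for UD :: "nat set \<times> nat set"
  have inL: "(\<Sum>S\<in>Pow (Lset n (fst UD) (snd UD)). WL (psi (UD, S))) = g UD * (t ^ k UD * r ^ f UD * (1 + t) ^ l UD)"
    if UD: "UD \<in> Q" for UD
  proof -
    have v: "validUD n (fst UD) (snd UD)" using UD unfolding Q_def by simp
    have "(\<Sum>S\<in>Pow (Lset n (fst UD) (snd UD)). WL (psi (UD, S)))
        = (\<Sum>S\<in>Pow (Lset n (fst UD) (snd UD)). (g UD * t ^ k UD * r ^ f UD) * t ^ card S)"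
    proof (rule sum.cong[OF refl])
      fix S assume "S \<in> Pow (Lset n (fst UD) (snd UD))"
      then have S: "S \<subseteq> Lset n (fst UD) (snd UD)" by simp
      show "WL (psi (UD, S)) = (g UD * t ^ k UD * r ^ f UD) * t ^ card S"
        unfolding WL_def psi_def g_def k_def f_def using UD_weights[OF v S] by (simp add: power_add)
    qed
    also have "\<dots> = (g UD * t ^ k UD * r ^ f UD) * (1 + t) ^ l UD"
      unfolding sum_distrib_left[symmetric] l_def using sum_pow_card[of "Lset n (fst UD) (snd UD)" t]
      unfolding Lset_def by simp
    finally show ?thesis by simp
  qed
  have inR: "(\<Sum>S\<in>Pow (Lset n (fst UD) (snd UD)). WR (psi (UD, S)))
       = g UD * (\<alpha> ^ k UD * \<beta> ^ k UD * \<gamma> ^ f UD * (1 + \<beta>) ^ l UD)"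
    if UD: "UD \<in> Q" for UD
  proof -
    have v: "validUD n (fst UD) (snd UD)" using UD unfolding Q_def by simp
    have kk: "card (snd UD) = k UD" using v unfolding validUD_def k_def by simp
    have "(\<Sum>S\<in>Pow (Lset n (fst UD) (snd UD)). WR (psi (UD, S)))
        = (\<Sum>S\<in>Pow (Lset n (fst UD) (snd UD)). (g UD * \<alpha> ^ k UD * \<beta> ^ k UD * \<gamma> ^ f UD) * \<beta> ^ card S)"
    proof (rule sum.cong[OF refl])
      fix S assume "S \<in> Pow (Lset n (fst UD) (snd UD))"
      then have S: "S \<subseteq> Lset n (fst UD) (snd UD)" by simp
      show "WR (psi (UD, S)) = (g UD * \<alpha> ^ k UD * \<beta> ^ k UD * \<gamma> ^ f UD) * \<beta> ^ card S"
        unfolding WR_def psi_def g_def f_def using UD_weights[OF v S] kk by (simp add: power_add k_def)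
    qed
    also have "\<dots> = (g UD * \<alpha> ^ k UD * \<beta> ^ k UD * \<gamma> ^ f UD) * (1 + \<beta>) ^ l UD"
      unfolding sum_distrib_left[symmetric] l_def using sum_pow_card[of "Lset n (fst UD) (snd UD)" \<beta>]
      unfolding Lset_def by simp
    finally show ?thesis by simp
  qed
  have "(\<Sum>\<sigma>\<in>av321 n. WL (Phi \<sigma>)) = (\<Sum>p\<in>P. WL p)" by (rule sum.reindex_bij_betw[OF bijPhi])
  also have "\<dots> = (\<Sum>UD\<in>Q. g UD * (t ^ k UD * r ^ f UD * (1 + t) ^ l UD))"
    unfolding sig by (rule sum.cong[OF refl]) (rule inL)
  finally have LL: "(\<Sum>\<sigma>\<in>av321 n. WL (Phi \<sigma>)) = (\<Sum>UD\<in>Q. g UD * (t ^ k UD * r ^ f UD * (1 + t) ^ l UD))" .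
  have "(\<Sum>\<sigma>\<in>av321 n. WR (Phi \<sigma>)) = (\<Sum>p\<in>P. WR p)" by (rule sum.reindex_bij_betw[OF bijPhi])
  also have "\<dots> = (\<Sum>UD\<in>Q. g UD * (\<alpha> ^ k UD * \<beta> ^ k UD * \<gamma> ^ f UD * (1 + \<beta>) ^ l UD))"
    unfolding sig by (rule sum.cong[OF refl]) (rule inR)
  finally have RR: "(\<Sum>\<sigma>\<in>av321 n. WR (Phi \<sigma>)) = (\<Sum>UD\<in>Q. g UD * (\<alpha> ^ k UD * \<beta> ^ k UD * \<gamma> ^ f UD * (1 + \<beta>) ^ l UD))" .
  have "c ^ n * (\<Sum>\<sigma>\<in>av321 n. WR (Phi \<sigma>)) = (\<Sum>UD\<in>Q. g UD * (c ^ n * (\<alpha> ^ k UD * \<beta> ^ k UD * \<gamma> ^ f UD * (1 + \<beta>) ^ l UD)))"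
    unfolding RR sum_distrib_left by (simp add: ac_simps)
  also have "\<dots> = (\<Sum>UD\<in>Q. g UD * (t ^ k UD * r ^ f UD * (1 + t) ^ l UD))"
  proof (rule sum.cong[OF refl])
    fix UD assume "UD \<in> Q"
    then have v: "validUD n (fst UD) (snd UD)" unfolding Q_def by simp
    have nn: "n = k UD + k UD + l UD + f UD"
      using UD_partition[OF v] v unfolding validUD_def k_def l_def f_def by simp
    show "g UD * (c ^ n * (\<alpha> ^ k UD * \<beta> ^ k UD * \<gamma> ^ f UD * (1 + \<beta>) ^ l UD)) = g UD * (t ^ k UD * r ^ f UD * (1 + t) ^ l UD)"
      using alg[OF assms(2,3,4) nn, of r] unfolding c_def \<alpha>_def \<beta>_def \<gamma>_def by simp
  qed
  finally show ?thesis using L1 R1 LL unfolding c_def by simp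
qed

end
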